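(* Let $(r_{i,j})_{i\ge 0,\, j\in\mathbb{Z}}$ be the Pascal rhombus, defined by $r_{0,0}=r_{1,-1}=r_{1,0}=r_{1,1}=1$, $r_{0,j}=0$ for $j\neq 0$, $r_{1,j}=0$ for $j\notin\{-1,0,1\}$, and $r_{i,j}=r_{i-1,j-1}+r_{i-1,j}+r_{i-1,j+1}+r_{i-2,j}$ for $i\ge 2$, $j\in\mathbb{Z}$. For every integer $j\ge 0$, the generating function of the $j$th column is $$L_j(x):=\sum_{i\ge 0} r_{i,j}x^i=\frac{F(x)^{j+1}\,C\big(F(x)^2\big)^j}{x\big(1-2F(x)^2C(F(x)^2)\big)},$$ where $F(x)=\frac{x}{1-x-x^2}$ and $C(x)=\frac{1-\sqrt{1-4x}}{2x}$. Moreover, for $0\le j\le i$, $$r_{i,j}=\sum_{m=0}^{i}\sum_{l=0}^{i-j-2m}\binom{2m+j}{m}\binom{l+j+2m}{l}\binom{l}{i-j-2m-l}.$$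
   Context: $F(x)$ is the generating function of the Fibonacci numbers and $C(x)$ that of the Catalan numbers; $C(F(x)^2)$ denotes composition of formal power series. Sums with upper limit smaller than the lower limit are empty. *)

theory Defs
  imports "HOL-Computational_Algebra.Formal_Power_Series"
begin

fun rhombus :: "nat \<Rightarrow> int \<Rightarrow> int" where
  "rhombus 0 j = (if j = 0 then 1 else 0)"
| "rhombus (Suc 0) j = (if j \<in> {-1, 0, 1} then 1 else 0)"
| "rhombus (Suc (Suc n)) j =
     rhombus (Suc n) (j - 1) + rhombus (Suc n) j + rhombus (Suc n) (j + 1) + rhombus n j"

definition catalan :: "nat \<Rightarrow> nat" where
  "catalan n = ((2 * n) choose n) div (n + 1)"

definition C_fps :: "real fps" where
  "C_fps = Abs_fps (\<lambda>n. real (catalan n))"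

definition F_fps :: "real fps" where
  "F_fps = fps_X / (1 - fps_X - fps_X ^ 2)"

definition L_fps :: "nat \<Rightarrow> real fps" where
  "L_fps j = Abs_fps (\<lambda>i. real_of_int (rhombus i (int j)))"

end

theory Submission
  imports Defs
begin
unbundle fps_syntax

lemma cb1: "(n+1) * ((2*n) choose (n+1)) = n * ((2*n) choose n)"
  by (metis add.commute add_diff_cancel_left' binomial_absorb_comp
    binomial_absorption id_apply mult_2 of_nat_eq_id
    semiring_1_class.of_nat_simps(2))

lemma cb2: "(n+1) * ((2*n+2) choose (n+1)) = 2*(2*n+1) * ((2*n) choose n)"
  by (smt (verit, ccfv_threshold) ab_semigroup_mult_class.mult_ac(1)
    add_diff_cancel_left' add_diff_cancel_right' binomial_absorb_comp
    choose_mult_lemma choose_one distrib_left_numeral left_add_twice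
    mult.commute mult_numeral_1 nat_add_1_add_1)

lemma cb2r: "(real n + 1) * real ((2*(n+1)) choose (n+1)) = (4 * real n + 2) * real ((2*n) choose n)"
proof -
  have "2*(n+1) = 2*n+2" by simp
  then have "real ((n+1) * ((2*(n+1)) choose (n+1))) = real (2*(2*n+1) * ((2*n) choose n))"
    using cb2 by metis
  then show ?thesis by (simp only: of_nat_mult of_nat_add) simp
qed

lemma cat_real: "real (catalan n) * (real n + 1) = real ((2*n) choose n)"
proof -
  define b where "b = (2*n) choose n"
  define c where "c = (2*n) choose (n+1)"
  have "(n+1) * (b - c) = (n+1) * b - n * b"
    by (simp only: diff_mult_distrib2 cb1 b_def c_def)
  also have "\<dots> = b" by simp
  finally have e: "(n+1) * (b - c) = b" .
  have "catalan n = b div (n+1)" unfolding catalan_def b_def by simp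
  also have "\<dots> = ((n+1) * (b - c)) div (n+1)" using e by simp
  also have "\<dots> = b - c" by (rule nonzero_mult_div_cancel_left) simp
  finally have "catalan n = b - c" .
  hence "real (catalan n) * (real n + 1) = real ((n+1) * (b - c))"
    by (simp only: of_nat_mult of_nat_add) simp
  also have "\<dots> = real b" by (simp only: e)
  finally show ?thesis unfolding b_def .
qed

definition S_fps :: "real fps" where "S_fps = Abs_fps (\<lambda>n. real ((2*n) choose n))"

lemma derivXC: "fps_deriv (fps_X * C_fps) = S_fps"
proof (rule fps_ext)
  fix n
  have "fps_deriv (fps_X * C_fps) $ n = (real n + 1) * real (catalan n)"
    by (simp add: C_fps_def algebra_simps)
  also have "\<dots> = S_fps $ n" unfolding S_fps_def fps_nth_Abs_fps using cat_real[of n]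
    by (simp add: mult.commute)
  finally show "fps_deriv (fps_X * C_fps) $ n = S_fps $ n" .
qed

lemma odeS: "fps_deriv S_fps = 4 * (fps_X * fps_deriv S_fps) + 2 * S_fps"
proof (rule fps_ext)
  fix n
  have a: "fps_deriv S_fps $ n = (real n + 1) * real ((2*(n+1)) choose (n+1))"
    unfolding fps_deriv_nth S_fps_def fps_nth_Abs_fps by simp
  have b: "(fps_X * fps_deriv S_fps) $ n = real n * real ((2*n) choose n)"
  proof (cases n)
    case 0 then show ?thesis by simp
  next
    case (Suc m)
    then show ?thesis unfolding fps_X_mult_nth fps_deriv_nth S_fps_def fps_nth_Abs_fps
      by simp
  qed
  show "fps_deriv S_fps $ n = (4 * (fps_X * fps_deriv S_fps) + 2 * S_fps) $ n"
    unfolding numeral_fps_const fps_add_nth fps_const_mult_apply_left a b using cb2r[of n]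
    by (simp add: S_fps_def algebra_simps)
qed

lemma S0: "S_fps $ 0 = 1" by (simp add: S_fps_def)

lemma R_one: "(1 - 4 * fps_X) * S_fps^2 = 1"
proof -
  define A :: "real fps" where "A = 1 - 4 * fps_X"
  let ?S = S_fps
  have h: "A * fps_deriv ?S = 2 * ?S"
    using odeS unfolding A_def by algebra
  have dA: "fps_deriv A = - 4" by (simp add: A_def)
  have "fps_deriv (A * (?S * ?S)) = fps_deriv A * (?S * ?S) + A * (fps_deriv ?S * ?S + ?S * fps_deriv ?S)"
    by (simp only: fps_deriv_mult) algebra
  also have "\<dots> = 0" unfolding dA using h by algebra
  finally have "fps_deriv (A * (?S * ?S)) = 0" .
  hence "A * (?S * ?S) = fps_const ((A * (?S * ?S)) $ 0)" using fps_deriv_eq_0_iff by blast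
  also have "(A * (?S * ?S)) $ 0 = 1" by (simp add: S0 A_def)
  finally show ?thesis by (simp add: A_def power2_eq_square)
qed

lemma V_zero: "1 - 2 * (fps_X * C_fps) = (1 - 4 * fps_X) * S_fps"
proof -
  define V where "V = 1 - 2 * (fps_X * C_fps) - (1 - 4 * fps_X) * S_fps"
  have "fps_deriv (2 * (fps_X * C_fps)) = fps_deriv (fps_X * C_fps + fps_X * C_fps)"
    by (simp only: mult_2)
  also have "\<dots> = S_fps + S_fps" by (simp only: fps_deriv_add derivXC)
  finally have d1: "fps_deriv (2 * (fps_X * C_fps)) = 2 * S_fps" by simp
  have d2: "fps_deriv ((1 - 4 * fps_X) * S_fps) = - 4 * S_fps + (1 - 4 * fps_X) * fps_deriv S_fps"
    by simp
  have "fps_deriv V = - (2 * S_fps) - (- 4 * S_fps + (1 - 4 * fps_X) * fps_deriv S_fps)"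
    unfolding V_def fps_deriv_sub d1 d2 by simp
  also have "\<dots> = 0" using odeS by algebra
  finally have "fps_deriv V = 0" .
  hence "V = fps_const (V $ 0)" using fps_deriv_eq_0_iff by blast
  also have "V $ 0 = 0" by (simp add: V_def S0)
  finally show ?thesis unfolding V_def by simp
qed

lemma C_eq: "C_fps = 1 + fps_X * C_fps^2"
proof -
  have "(1 - 2 * (fps_X * C_fps))^2 = (1 - 4 * fps_X) * ((1 - 4 * fps_X) * S_fps^2)"
    unfolding V_zero by algebra
  also have "\<dots> = 1 - 4 * fps_X" by (simp add: R_one)
  finally have e: "(1 - 2 * (fps_X * C_fps))^2 = 1 - 4 * fps_X" .
  have "4 * fps_X * (C_fps - 1 - fps_X * C_fps^2) = 0"
    using e by algebra
  hence "C_fps - 1 - fps_X * C_fps^2 = 0" by simp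
  thus ?thesis by (simp add: algebra_simps)
qed



definition sys :: "real fps \<Rightarrow> real fps \<Rightarrow> (nat \<Rightarrow> real fps) \<Rightarrow> bool" where
  "sys c y Q \<longleftrightarrow> Q 0 = c + 2 * y * Q 1 \<and> (\<forall>j. Q (Suc j) = y * (Q j + Q (Suc (Suc j))))"

lemma mult_y_zero:
  fixes y A :: "real fps"
  assumes "y $ 0 = 0" "\<forall>k<n. A $ k = 0"
  shows "(y * A) $ n = 0"
  unfolding fps_mult_nth
proof (rule sum.neutral, rule ballI)
  fix i assume "i \<in> {0..n}"
  show "y $ i * A $ (n - i) = 0"
  proof (cases "i = 0")
    case True then show ?thesis using assms(1) by simp
  next
    case False then have "n - i < n" using \<open>i \<in> {0..n}\<close> by auto
    then show ?thesis using assms(2) by simp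
  qed
qed

lemma sys_unique:
  assumes y0: "y $ 0 = 0" and s1: "sys c y Q" and s2: "sys c y Q'"
  shows "Q = Q'"
proof -
  define R where "R j = Q j - Q' j" for j
  have a1: "Q 0 = c + 2 * y * Q 1" and b1: "\<And>j. Q (Suc j) = y * (Q j + Q (Suc (Suc j)))"
    using s1 unfolding sys_def by blast+
  have a2: "Q' 0 = c + 2 * y * Q' 1" and b2: "\<And>j. Q' (Suc j) = y * (Q' j + Q' (Suc (Suc j)))"
    using s2 unfolding sys_def by blast+
  have R0: "R 0 = y * (2 * R 1)" unfolding R_def a1 a2 by algebra
  have RS: "R (Suc j) = y * (R j + R (Suc (Suc j)))" for j
    unfolding R_def b1[of j] b2[of j] by algebra
  have "\<forall>j. R j $ n = 0" for n
  proof (induction n rule: less_induct)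
    case (less n)
    show ?case
    proof
      fix j
      show "R j $ n = 0"
      proof (cases j)
        case 0
        have "\<forall>k<n. (2 * R 1) $ k = 0" using less by (simp add: numeral_fps_const)
        then show ?thesis unfolding 0 R0 by (rule mult_y_zero[OF y0])
      next
        case (Suc i)
        have "\<forall>k<n. (R i + R (Suc (Suc i))) $ k = 0" using less by simp
        then show ?thesis unfolding Suc RS[of i] by (rule mult_y_zero[OF y0])
      qed
    qed
  qed
  then have "R j = 0" for j by (intro fps_ext) simp
  then have "Q j = Q' j" for j unfolding R_def by simp
  then show ?thesis by (rule ext)
qed

lemma rh_sym: "rhombus n (-j) = rhombus n j \<and> rhombus (Suc n) (-j) = rhombus (Suc n) j"
proof (induction n arbitrary: j)
  case 0 then show ?case by auto
next
  case (Suc n)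
  have e1: "-j - 1 = -(j+1)" by simp
  have a: "rhombus (Suc n) (-j - 1) = rhombus (Suc n) (j + 1)"
    unfolding e1 using Suc.IH[of "j+1"] by blast
  have e2: "-j + 1 = -(j-1)" by simp
  have b: "rhombus (Suc n) (-j + 1) = rhombus (Suc n) (j - 1)"
    unfolding e2 using Suc.IH[of "j-1"] by blast
  have "rhombus (Suc (Suc n)) (-j) = rhombus (Suc (Suc n)) j"
    using a b Suc.IH[of j] by simp
  then show ?case using Suc.IH by simp
qed

definition Lz :: "int \<Rightarrow> real fps" where
  "Lz j = Abs_fps (\<lambda>i. real_of_int (rhombus i j))"

lemma Lz_sym: "Lz (-j) = Lz j"
  unfolding Lz_def using rh_sym by simp

lemma Lz_rec: "(1 - fps_X - fps_X^2) * Lz j = fps_const (if j = 0 then 1 else 0) + fps_X * (Lz (j-1) + Lz (j+1))"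
proof (rule fps_ext)
  fix n
  have e: "(1 - fps_X - fps_X^2) * Lz j = Lz j - fps_X * Lz j - fps_X^2 * Lz j"
    by (simp add: algebra_simps)
  show "((1 - fps_X - fps_X^2) * Lz j) $ n = (fps_const (if j = 0 then 1 else 0) + fps_X * (Lz (j-1) + Lz (j+1))) $ n"
  proof (cases n)
    case 0 then show ?thesis unfolding e by (simp add: Lz_def fps_X_power_mult_nth)
  next
    case (Suc m)
    show ?thesis
    proof (cases m)
      case 0 then show ?thesis unfolding e Suc by (auto simp add: Lz_def fps_X_power_mult_nth)
    next
      case (Suc k)
      then show ?thesis unfolding e \<open>n = Suc m\<close> by (simp add: Lz_def fps_X_power_mult_nth)
    qed
  qed
qed

definition Fp :: "real fps" where "Fp = inverse (1 - fps_X - fps_X^2)"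

lemma den0: "(1 - fps_X - fps_X^2 :: real fps) $ 0 = 1" by simp

lemma Fp_inv: "Fp * (1 - fps_X - fps_X^2) = 1"
  unfolding Fp_def by (rule inverse_mult_eq_1) simp

lemma F_eq: "F_fps = fps_X * Fp"
  unfolding F_fps_def Fp_def by (simp add: fps_divide_unit)

lemma F0: "F_fps $ 0 = 0" by (simp add: F_eq)

lemma Lz_rec2: "Lz j = fps_const (if j = 0 then 1 else 0) * Fp + F_fps * (Lz (j-1) + Lz (j+1))"
proof -
  have "Lz j = Fp * ((1 - fps_X - fps_X^2) * Lz j)"
    by (simp only: mult.assoc[symmetric] Fp_inv mult_1_left)
  also have "\<dots> = Fp * (fps_const (if j = 0 then 1 else 0) + fps_X * (Lz (j-1) + Lz (j+1)))"
    by (simp only: Lz_rec)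
  finally show ?thesis by (simp add: F_eq algebra_simps)
qed

lemma L_sys: "sys Fp F_fps L_fps"
proof -
  have L: "L_fps j = Lz (int j)" for j unfolding L_fps_def Lz_def by simp
  have "L_fps 0 = Fp + 2 * F_fps * L_fps 1"
    unfolding L using Lz_rec2[of 0] Lz_sym[of 1] by (simp add: algebra_simps mult_2)
  moreover have "L_fps (Suc j) = F_fps * (L_fps j + L_fps (Suc (Suc j)))" for j
    unfolding L using Lz_rec2[of "int (Suc j)"] by (simp add: algebra_simps)
  ultimately show ?thesis unfolding sys_def by blast+
qed



definition Cc :: "real fps" where "Cc = C_fps oo F_fps^2"
definition B :: "real fps" where "B = F_fps * Cc"
definition D :: "real fps" where "D = 1 - 2 * F_fps * B"
definition G :: "nat \<Rightarrow> real fps" where "G j = Fp * B^j * inverse D"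

lemma F2_0: "(F_fps^2) $ 0 = 0" by (simp add: F0 power2_eq_square)

lemma Cc_eq: "Cc = 1 + F_fps^2 * Cc^2"
proof -
  have "Cc = (1 + fps_X * C_fps^2) oo F_fps^2" unfolding Cc_def by (subst C_eq) (rule refl)
  also have "\<dots> = 1 + F_fps^2 * Cc^2"
    unfolding Cc_def fps_compose_add_distrib fps_compose_mult_distrib[OF F2_0]
      fps_compose_power[OF F2_0, symmetric] fps_compose_1 fps_X_fps_compose_startby0[OF F2_0] ..
  finally show ?thesis .
qed

lemma B_eq: "B = F_fps * (1 + B^2)"
  unfolding B_def using Cc_eq by algebra

lemma D0: "D $ 0 = 1" by (simp add: D_def F0)

lemma iD: "inverse D * D = 1" by (rule inverse_mult_eq_1) (simp add: D0)

lemma G_sys: "sys Fp F_fps G"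
  unfolding sys_def
proof
  show "G 0 = Fp + 2 * F_fps * G 1"
    unfolding G_def using iD unfolding D_def by algebra
  show "\<forall>j. G (Suc j) = F_fps * (G j + G (Suc (Suc j)))"
  proof
    fix j
    have "F_fps * (G j + G (Suc (Suc j))) = Fp * B^j * inverse D * (F_fps * (1 + B^2))"
      unfolding G_def power_Suc by (simp add: algebra_simps power2_eq_square)
    also have "\<dots> = Fp * B^j * inverse D * B" by (simp only: B_eq[symmetric])
    also have "\<dots> = G (Suc j)" unfolding G_def by (simp add: algebra_simps)
    finally show "G (Suc j) = F_fps * (G j + G (Suc (Suc j)))" by simp
  qed
qed

lemma L_G: "L_fps = G"
  by (rule sys_unique[OF F0 L_sys G_sys])

lemma part1: "L_fps j = (F_fps ^ (j + 1) * (C_fps oo F_fps ^ 2) ^ j)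
            / (fps_X * (1 - 2 * F_fps ^ 2 * (C_fps oo F_fps ^ 2)))"
proof -
  have "F_fps ^ (j + 1) * (C_fps oo F_fps ^ 2) ^ j = F_fps * (F_fps * Cc)^j"
    unfolding Cc_def by (simp add: power_mult_distrib)
  also have "\<dots> = F_fps * B^j" unfolding B_def ..
  also have "\<dots> = fps_X * (Fp * B^j)" unfolding F_eq by simp
  finally have n: "F_fps ^ (j + 1) * (C_fps oo F_fps ^ 2) ^ j = fps_X * (Fp * B^j)" .
  have d: "fps_X * (1 - 2 * F_fps ^ 2 * (C_fps oo F_fps ^ 2)) = fps_X * D"
    unfolding D_def B_def Cc_def[symmetric] by (simp add: power2_eq_square algebra_simps)
  have "(fps_X * (Fp * B^j)) / (fps_X * D) = (Fp * B^j) / D"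
    by (rule div_mult_mult1) simp
  also have "\<dots> = Fp * B^j * inverse D" by (rule fps_divide_unit) (simp add: D0)
  finally show ?thesis unfolding n d L_G G_def by simp
qed



definition P :: "nat \<Rightarrow> real fps" where
  "P j = Abs_fps (\<lambda>k. if j \<le> k \<and> even (k - j) then real (k choose ((k - j) div 2)) else 0)"

lemma cb3: "(2*m+2) choose (m+1) = 2 * ((2*m+1) choose m)"
proof -
  have "(2*m+1) choose (m+1) = (2*m+1) choose m"
    using binomial_symmetric[of "m+1" "2*m+1"] by simp
  then show ?thesis using binomial_Suc_Suc[of "2*m+1" m] by simp
qed

lemma two_X_nth: "(2 * fps_X * A :: real fps) $ k = (if k = 0 then 0 else 2 * A $ (k - 1))"
  unfolding numeral_fps_const mult.assoc fps_const_mult_apply_left by simp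

lemma P_sys: "sys 1 fps_X P"
  unfolding sys_def
proof
  show "P 0 = 1 + 2 * fps_X * P 1"
  proof (rule fps_ext)
    fix k
    show "P 0 $ k = (1 + 2 * fps_X * P 1) $ k"
    proof (cases k)
      case 0 then show ?thesis by (simp add: P_def two_X_nth)
    next
      case (Suc k')
      show ?thesis
      proof (cases k')
        case 0 then show ?thesis using Suc by (simp add: P_def two_X_nth)
      next
        case (Suc t)
        show ?thesis
        proof (cases "even t")
          case True
          then obtain m where t: "t = 2*m" by (elim evenE)
          have "k = 2*m+2" using Suc \<open>k = Suc k'\<close> t by simp
          then show ?thesis using \<open>k = Suc k'\<close> Suc t cb3[of m]
            by (simp add: P_def two_X_nth)
        next
          case False
          then show ?thesis using \<open>k = Suc k'\<close> Suc by (simp add: P_def two_X_nth)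
        qed
      qed
    qed
  qed
  show "\<forall>j. P (Suc j) = fps_X * (P j + P (Suc (Suc j)))"
  proof
    fix j
    show "P (Suc j) = fps_X * (P j + P (Suc (Suc j)))"
    proof (rule fps_ext)
      fix k
      show "P (Suc j) $ k = (fps_X * (P j + P (Suc (Suc j)))) $ k"
      proof (cases k)
        case 0 then show ?thesis by (simp add: P_def)
      next
        case (Suc k')
        show ?thesis
        proof (cases "j \<le> k' \<and> even (k' - j)")
          case True
          then obtain m where km: "k' = j + 2*m"
            by (metis evenE le_add_diff_inverse)
          show ?thesis
          proof (cases m)
            case 0 then show ?thesis using Suc km by (simp add: P_def)
          next
            case (Suc m')
            have "k = Suc (Suc (j + 2*m' + 1))" using \<open>k = Suc k'\<close> km Suc by simp
            then show ?thesis using \<open>k = Suc k'\<close> km Suc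
              by (simp add: P_def)
          qed
        next
          case False
          then have "\<not> (Suc (Suc j) \<le> k' \<and> even (k' - Suc (Suc j)))"
            by auto
          then have r2: "P (Suc (Suc j)) $ k' = 0" unfolding P_def fps_nth_Abs_fps by (rule if_not_P)
          have r1: "P j $ k' = 0" unfolding P_def fps_nth_Abs_fps using False by (rule if_not_P)
          have "\<not> (Suc j \<le> k \<and> even (k - Suc j))" using False Suc by simp
          then have l: "P (Suc j) $ k = 0" unfolding P_def fps_nth_Abs_fps by (rule if_not_P)
          show ?thesis using l r1 r2 Suc by simp
        qed
      qed
    qed
  qed
qed

definition Q :: "nat \<Rightarrow> real fps" where "Q j = Fp * (P j oo F_fps)"

lemma Q_sys: "sys Fp F_fps Q"
proof -
  have c2: "(2 * fps_X * A) oo F_fps = 2 * F_fps * (A oo F_fps)" for A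
    unfolding numeral_fps_const fps_compose_mult_distrib[OF F0] fps_const_compose
      fps_X_fps_compose_startby0[OF F0] ..
  have c1: "(fps_X * A) oo F_fps = F_fps * (A oo F_fps)" for A
    unfolding fps_compose_mult_distrib[OF F0] fps_X_fps_compose_startby0[OF F0] ..
  have a: "P 0 = 1 + 2 * fps_X * P 1" and b: "\<And>j. P (Suc j) = fps_X * (P j + P (Suc (Suc j)))"
    using P_sys unfolding sys_def by blast+
  have "Q 0 = Fp + 2 * F_fps * Q 1"
    unfolding Q_def a fps_compose_add_distrib c2 fps_compose_1 by (simp add: algebra_simps)
  moreover have "Q (Suc j) = F_fps * (Q j + Q (Suc (Suc j)))" for j
    unfolding Q_def b[of j] c1 fps_compose_add_distrib by (simp add: algebra_simps)
  ultimately show ?thesis unfolding sys_def by blast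
qed

lemma L_Q: "L_fps = Q"
  by (rule sys_unique[OF F0 L_sys Q_sys])

lemma comp_coeff: "(Fp * (A oo F_fps)) $ i = (\<Sum>k=0..i. A $ k * (Fp * F_fps^k) $ i)"
proof -
  have "(Fp * (A oo F_fps)) $ i = (\<Sum>a=0..i. Fp $ a * (\<Sum>k=0..i-a. A $ k * (F_fps^k) $ (i-a)))"
    unfolding fps_mult_nth fps_compose_nth ..
  also have "\<dots> = (\<Sum>a=0..i. Fp $ a * (\<Sum>k=0..i. A $ k * (F_fps^k) $ (i-a)))"
  proof (rule sum.cong[OF refl])
    fix a assume "a \<in> {0..i}"
    have "(\<Sum>k=0..i. A $ k * (F_fps^k) $ (i-a)) = (\<Sum>k=0..i-a. A $ k * (F_fps^k) $ (i-a))"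
    proof (rule sum.mono_neutral_right)
      show "\<forall>k\<in>{0..i} - {0..i-a}. A $ k * (F_fps^k) $ (i-a) = 0"
        using startsby_zero_power_prefix[OF F0] by auto
    qed auto
    then show "Fp $ a * (\<Sum>k=0..i-a. A $ k * (F_fps^k) $ (i-a)) = Fp $ a * (\<Sum>k=0..i. A $ k * (F_fps^k) $ (i-a))"
      by simp
  qed
  also have "\<dots> = (\<Sum>a=0..i. \<Sum>k=0..i. A $ k * (Fp $ a * (F_fps^k) $ (i-a)))"
    by (simp add: sum_distrib_left mult.left_commute)
  also have "\<dots> = (\<Sum>k=0..i. \<Sum>a=0..i. A $ k * (Fp $ a * (F_fps^k) $ (i-a)))"
    by (rule sum.swap)
  also have "\<dots> = (\<Sum>k=0..i. A $ k * (\<Sum>a=0..i. Fp $ a * (F_fps^k) $ (i-a)))"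
    by (simp add: sum_distrib_left)
  also have "\<dots> = (\<Sum>k=0..i. A $ k * (Fp * F_fps^k) $ i)"
    unfolding fps_mult_nth ..
  finally show ?thesis .
qed



definition Ones :: "real fps" where "Ones = Abs_fps (\<lambda>n. 1)"
definition Y :: "real fps" where "Y = fps_X + fps_X^2"

lemma Y0: "Y $ 0 = 0" by (simp add: Y_def)

lemma inv_1mX: "inverse (1 - fps_X) = Ones"
proof -
  have "inverse Ones = 1 - fps_X" unfolding Ones_def by (rule fps_inverse_gp')
  then have "inverse (1 - fps_X) = inverse (inverse Ones)" by simp
  also have "\<dots> = Ones" by (rule fps_inverse_idempotent) (simp add: Ones_def)
  finally show ?thesis .
qed

lemma Fp_comp: "Fp = Ones oo Y"
proof -
  have "Ones oo Y = inverse ((1 - fps_X) oo Y)"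
    unfolding inv_1mX[symmetric] by (rule fps_inverse_compose[OF Y0]) simp
  also have "(1 - fps_X) oo Y = 1 - fps_X - fps_X^2"
    unfolding fps_compose_sub_distrib fps_compose_1 fps_X_fps_compose_startby0[OF Y0]
    by (simp add: Y_def algebra_simps)
  finally show ?thesis unfolding Fp_def by simp
qed

lemma Ones_pow: "(Ones ^ (k+1)) $ l = real ((l + k) choose l)"
proof (induction k arbitrary: l)
  case 0 then show ?case by (simp add: Ones_def)
next
  case (Suc k)
  have "(Ones ^ (Suc k + 1)) $ l = (Ones ^ (k+1) * Ones) $ l"
    by (simp only: power_Suc2 add_Suc)
  also have "\<dots> = (\<Sum>a=0..l. real ((a + k) choose a))"
    unfolding fps_mult_nth Suc by (simp add: Ones_def)
  also have "\<dots> = real (\<Sum>a\<le>l. (k + a) choose a)"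
    by (simp add: atLeast0AtMost add.commute)
  also have "\<dots> = real ((l + Suc k) choose l)"
    by (simp only: sum_choose_lower) (simp add: add.commute)
  finally show ?case .
qed

lemma onepX_pow: "((1 + fps_X) ^ l :: real fps) $ p = real (l choose p)"
proof -
  have "((1 + fps_X) ^ l :: real fps) = fps_binomial (of_nat l)"
    by (simp add: fps_binomial_of_nat)
  then show ?thesis by (simp add: binomial_gbinomial)
qed

lemma Y_pow: "(Y ^ l) $ N = (if N < l then 0 else real (l choose (N - l)))"
proof -
  have "Y ^ l = fps_X ^ l * (1 + fps_X) ^ l"
    unfolding Y_def by (simp add: power2_eq_square algebra_simps flip: power_mult_distrib)
  then show ?thesis by (simp add: fps_X_power_mult_nth onepX_pow)
qed

lemma Fp_pow: "(Fp ^ (k+1)) $ N = (\<Sum>l=0..N. real ((l + k) choose l) * real (l choose (N - l)))"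
proof -
  have "Fp ^ (k+1) = Ones ^ (k+1) oo Y"
    unfolding Fp_comp by (rule fps_compose_power[OF Y0])
  then have "(Fp ^ (k+1)) $ N = (\<Sum>l=0..N. (Ones ^ (k+1)) $ l * (Y ^ l) $ N)"
    by (simp only: fps_compose_nth)
  also have "\<dots> = (\<Sum>l=0..N. real ((l + k) choose l) * real (l choose (N - l)))"
    by (rule sum.cong[OF refl]) (simp only: Ones_pow Y_pow, simp)
  finally show ?thesis .
qed

definition Tn :: "nat \<Rightarrow> nat \<Rightarrow> real" where
  "Tn i k = (if k \<le> i then (\<Sum>l=0..i-k. real ((l + k) choose l) * real (l choose (i - k - l))) else 0)"

lemma T_coeff: "(Fp * F_fps ^ k) $ i = Tn i k"
proof -
  have e: "Fp * F_fps ^ k = fps_X ^ k * Fp ^ (k+1)"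
    unfolding F_eq by (simp add: power_mult_distrib algebra_simps)
  have h: "(Fp * F_fps ^ k) $ i = (if i < k then 0 else (Fp ^ (k+1)) $ (i - k))"
    unfolding e by (rule fps_X_power_mult_nth)
  show ?thesis unfolding h Fp_pow Tn_def by (simp add: diff_diff_left)
qed

lemma main_real: "real_of_int (rhombus i (int j)) = (\<Sum>m=0..i. real ((2*m+j) choose m) * Tn i (2*m+j))"
proof -
  have "real_of_int (rhombus i (int j)) = L_fps j $ i" by (simp add: L_fps_def)
  also have "\<dots> = (\<Sum>k=0..i. P j $ k * Tn i k)"
    unfolding L_Q Q_def comp_coeff T_coeff ..
  also have "\<dots> = (\<Sum>k\<in>(\<lambda>m. 2*m+j) ` {0..i}. P j $ k * Tn i k)"
  proof -
    let ?h = "\<lambda>k. P j $ k * Tn i k"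
    let ?S = "(\<lambda>m. 2*m+j) ` {0..i}"
    have "sum ?h {0..i} = sum ?h ({0..i} \<union> ?S)"
    proof (rule sum.mono_neutral_left)
      show "\<forall>x\<in>{0..i} \<union> ?S - {0..i}. ?h x = 0" by (auto simp: Tn_def)
    qed auto
    also have "\<dots> = sum ?h ?S"
    proof (rule sum.mono_neutral_right)
      show "\<forall>x\<in>{0..i} \<union> ?S - ?S. ?h x = 0"
      proof
        fix x assume x: "x \<in> {0..i} \<union> ?S - ?S"
        have "\<not> (j \<le> x \<and> even (x - j))"
        proof
          assume a: "j \<le> x \<and> even (x - j)"
          then obtain m where "x - j = 2*m" by (elim conjE evenE)
          then have "x = 2*m + j" "m \<le> i" using a x by auto
          then show False using x by auto
        qed
        then have "P j $ x = 0" unfolding P_def fps_nth_Abs_fps by (rule if_not_P)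
        then show "?h x = 0" by simp
      qed
    qed auto
    finally show ?thesis .
  qed
  also have "\<dots> = (\<Sum>m=0..i. P j $ (2*m+j) * Tn i (2*m+j))"
    by (subst sum.reindex) (auto simp: inj_on_def)
  also have "\<dots> = (\<Sum>m=0..i. real ((2*m+j) choose m) * Tn i (2*m+j))"
    by (simp add: P_def)
  finally show ?thesis .
qed

lemma inner_sum:
  "real_of_int (\<Sum>l \<in> {0..int i - int j - 2 * int m}.
                  int (((2 * m + j) choose m)
                       * ((nat l + j + 2 * m) choose (nat l))
                       * (nat l choose nat (int i - int j - 2 * int m - l))))
   = real ((2*m+j) choose m) * Tn i (2*m+j)"
proof (cases "2*m+j \<le> i")
  case True
  define N where "N = i - (2*m+j)"
  have e: "int i - int j - 2 * int m = int N" using True unfolding N_def by simp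
  have "(\<Sum>l \<in> {0..int i - int j - 2 * int m}.
                  int (((2 * m + j) choose m)
                       * ((nat l + j + 2 * m) choose (nat l))
                       * (nat l choose nat (int i - int j - 2 * int m - l))))
      = (\<Sum>l \<in> int ` {0..N}.
                  int (((2 * m + j) choose m)
                       * ((nat l + j + 2 * m) choose (nat l))
                       * (nat l choose nat (int N - l))))"
    unfolding e image_int_atLeastAtMost by simp
  also have "\<dots> = (\<Sum>l=0..N. int (((2 * m + j) choose m)
                       * ((l + j + 2 * m) choose l)
                       * (l choose (N - l))))"
    unfolding sum.reindex[OF inj_on_of_nat] comp_def
  proof (rule sum.cong[OF refl])
    fix l assume "l \<in> {0..N}"
    then have "nat (int N - int l) = N - l" by auto
    then show "int (((2 * m + j) choose m) * ((nat (int l) + j + 2 * m) choose (nat (int l)))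
                       * (nat (int l) choose nat (int N - int l)))
             = int (((2 * m + j) choose m) * ((l + j + 2 * m) choose l) * (l choose (N - l)))"
      by simp
  qed
  finally have s: "(\<Sum>l \<in> {0..int i - int j - 2 * int m}.
                  int (((2 * m + j) choose m)
                       * ((nat l + j + 2 * m) choose (nat l))
                       * (nat l choose nat (int i - int j - 2 * int m - l))))
      = (\<Sum>l=0..N. int (((2 * m + j) choose m)
                       * ((l + j + 2 * m) choose l)
                       * (l choose (N - l))))" .
  have "Tn i (2*m+j) = (\<Sum>l=0..N. real ((l + (2*m+j)) choose l) * real (l choose (N - l)))"
    using True unfolding Tn_def N_def by (simp add: diff_diff_left)
  then show ?thesis unfolding s
    by (simp add: sum_distrib_left algebra_simps)
next
  case False
  then have "int i - int j - 2 * int m < 0" by simp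
  then show ?thesis using False by (simp add: Tn_def)
qed

theorem corollary2p4:
  shows "(\<forall>j::nat. L_fps j =
            (F_fps ^ (j + 1) * (C_fps oo F_fps ^ 2) ^ j)
            / (fps_X * (1 - 2 * F_fps ^ 2 * (C_fps oo F_fps ^ 2))))
       \<and> (\<forall>i j :: nat. j \<le> i \<longrightarrow>
            rhombus i (int j) =
              (\<Sum>m = 0..i. \<Sum>l \<in> {0..int i - int j - 2 * int m}.
                  int (((2 * m + j) choose m)
                       * ((nat l + j + 2 * m) choose (nat l))
                       * (nat l choose nat (int i - int j - 2 * int m - l)))))"
proof (intro conjI allI impI)
  fix j show "L_fps j = (F_fps ^ (j + 1) * (C_fps oo F_fps ^ 2) ^ j)
            / (fps_X * (1 - 2 * F_fps ^ 2 * (C_fps oo F_fps ^ 2)))" by (rule part1)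
next
  fix i j :: nat
  have "real_of_int (rhombus i (int j)) = real_of_int (\<Sum>m = 0..i. \<Sum>l \<in> {0..int i - int j - 2 * int m}.
                  int (((2 * m + j) choose m)
                       * ((nat l + j + 2 * m) choose (nat l))
                       * (nat l choose nat (int i - int j - 2 * int m - l))))"
    unfolding main_real of_int_sum[where A="{0..i}"] inner_sum ..
  then show "rhombus i (int j) = (\<Sum>m = 0..i. \<Sum>l \<in> {0..int i - int j - 2 * int m}.
                  int (((2 * m + j) choose m)
                       * ((nat l + j + 2 * m) choose (nat l))
                       * (nat l choose nat (int i - int j - 2 * int m - l))))"
    by (simp only: of_int_eq_iff)
qed


end
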